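(* Let $\mathcal H$ be a complex Hilbert space of finite dimension $n$, and let $\mathbf A=(A_1,\dots,A_m)$ be an $m$-tuple of self-adjoint operators on $\mathcal H$ such that $\{A_1,\dots,A_m\}$ is linearly independent. Assume $\mathbf 0\in\Lambda_{n-1}(\mathbf A)$, i.e., there is an orthonormal basis of $\mathcal H$ in which every $A_j$ has matrix of the form $\begin{pmatrix} * & * \\ * & 0_{n-1}\end{pmatrix}$. (a) If $m=2n-1$, then there is an invertible $S\in M_m(\mathbb R)$ such that $$\Lambda_1(\mathbf A)=\Big\{(1+u_1,u_2,\dots,u_m)S:\ u_1,\dots,u_m\in\mathbb R,\ \sum_{j=1}^m u_j^2=1\Big\},$$ so that $\Lambda_1(\mathbf A)$ is not star-shaped. (b) If $m<2n-1$, then $\Lambda_1(\mathbf A)$ is star-shaped with $\mathbf 0$ as a star center.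
   Context: For an $m$-tuple $\mathbf A=(A_1,\dots,A_m)$ of self-adjoint operators on a complex Hilbert space $\mathcal H$ and a positive integer $k$, $\Lambda_k(\mathbf A)=\{(a_1,\dots,a_m)\in\mathbb R^m:$ there is an orthogonal projection $P$ of rank $k$ with $PA_jP=a_jP$ for all $j\}$; in particular $\Lambda_1(\mathbf A)=\{(\langle A_1x,x\rangle,\dots,\langle A_mx,x\rangle): x\in\mathcal H,\ \|x\|=1\}$ is the joint numerical range. A set $S\subseteq\mathbb R^m$ is star-shaped with star center $\mathbf c\in S$ if for every $\mathbf b\in S$ the segment joining $\mathbf c$ and $\mathbf b$ lies in $S$. Row vectors in $\mathbb R^m$ are multiplied on the right by $m\times m$ matrices. *)

theory Defs
  imports "HOL-Analysis.Analysis"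
begin

(* The n-dimensional complex Hilbert space is modelled as complex^'n (standard inner
   product), operators as complex n x n matrices complex^'n^'n. *)

definition hermitian :: "complex^'n^'n \<Rightarrow> bool" where
  "hermitian A \<longleftrightarrow> (\<forall>i j. A $ i $ j = cnj (A $ j $ i))"

definition orth_proj :: "complex^'n^'n \<Rightarrow> bool" where
  "orth_proj P \<longleftrightarrow> hermitian P \<and> P ** P = P"

definition higher_rank_nr :: "nat \<Rightarrow> ('m \<Rightarrow> complex^'n^'n) \<Rightarrow> (real^'m) set" where
  "higher_rank_nr k A = {a. \<exists>P. orth_proj P \<and> rank P = k \<and>
        (\<forall>j. P ** A j ** P = (a $ j) *\<^sub>R P)}"

(* real linear independence of the family A_1,...,A_m (as m distinct elements) *)
definition lin_indep_tuple :: "('m::finite \<Rightarrow> 'b::real_vector) \<Rightarrow> bool" where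
  "lin_indep_tuple A \<longleftrightarrow> (\<forall>c. (\<Sum>j\<in>UNIV. c j *\<^sub>R A j) = 0 \<longrightarrow> (\<forall>j. c j = 0))"

definition star_center :: "'a::real_vector set \<Rightarrow> 'a \<Rightarrow> bool" where
  "star_center S c \<longleftrightarrow> c \<in> S \<and> (\<forall>b\<in>S. closed_segment c b \<subseteq> S)"

end

theory Submission
  imports Defs
begin

definition cdot :: "complex^'n \<Rightarrow> complex^'n \<Rightarrow> complex" where
  "cdot x y = (\<Sum>i\<in>UNIV. cnj (x$i) * y$i)"

definition outer :: "complex^'n \<Rightarrow> complex^'n \<Rightarrow> complex^'n^'n" where
  "outer x y = (\<chi> i j. x$i * cnj (y$j))"

lemma cdot_add_right: "cdot x (y + z) = cdot x y + cdot x z"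
  by (simp add: cdot_def distrib_left sum.distrib)
lemma cdot_add_left: "cdot (x + y) z = cdot x z + cdot y z"
  by (simp add: cdot_def distrib_right sum.distrib)
lemma cdot_diff_right: "cdot x (y - z) = cdot x y - cdot x z"
  by (simp add: cdot_def right_diff_distrib sum_subtractf)
lemma cdot_diff_left: "cdot (x - y) z = cdot x z - cdot y z"
  by (simp add: cdot_def left_diff_distrib sum_subtractf)
lemma cdot_smult_right: "cdot x (c *s y) = c * cdot x y"
  by (simp add: cdot_def sum_distrib_left algebra_simps)
lemma cdot_smult_left: "cdot (c *s x) y = cnj c * cdot x y"
  by (simp add: cdot_def sum_distrib_left algebra_simps)
lemma scaleR_smult: "r *\<^sub>R y = (of_real r) *s (y::complex^'n)"
  by (simp add: vec_eq_iff scaleR_conv_of_real[where 'a=complex])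
lemma cdot_scaleR_right: "cdot x (r *\<^sub>R y) = of_real r * cdot x y"
  by (simp add: scaleR_smult cdot_smult_right)
lemma cdot_scaleR_left: "cdot (r *\<^sub>R x) y = of_real r * cdot x y"
  by (simp add: scaleR_smult cdot_smult_left)
lemma cdot_zero_right[simp]: "cdot x 0 = 0" by (simp add: cdot_def)
lemma cdot_zero_left[simp]: "cdot 0 x = 0" by (simp add: cdot_def)
lemma cdot_cnj: "cnj (cdot x y) = cdot y x"
  by (simp add: cdot_def mult.commute)
lemma cdot_self: "cdot x x = of_real (norm x ^ 2)"
proof -
  have "cdot x x = (\<Sum>i\<in>UNIV. of_real (norm (x$i) ^ 2))"
    unfolding cdot_def by (rule sum.cong) (auto simp: complex_norm_square mult.commute simp flip: of_real_power)
  also have "\<dots> = of_real (\<Sum>i\<in>UNIV. norm (x$i) ^ 2)" by simp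
  also have "(\<Sum>i\<in>UNIV. norm (x$i) ^ 2) = norm x ^ 2"
    by (simp add: norm_vec_def L2_set_def sum_nonneg)
  finally show ?thesis .
qed
lemma inner_cdot: "inner x y = Re (cdot x y)"
  by (simp add: cdot_def inner_vec_def inner_complex_def)

lemma herm_cdot:
  assumes "hermitian A" shows "cdot (A *v x) y = cdot x (A *v y)"
proof -
  have "cdot (A *v x) y = (\<Sum>i\<in>UNIV. \<Sum>j\<in>UNIV. cnj (A$i$j) * cnj (x$j) * y$i)"
    by (simp add: cdot_def matrix_vector_mult_def sum_distrib_right)
  also have "\<dots> = (\<Sum>j\<in>UNIV. \<Sum>i\<in>UNIV. cnj (x$j) * (A$j$i * y$i))"
  proof -
    have h: "\<And>i j. cnj (A$i$j) = A$j$i" using assms unfolding hermitian_def by (metis complex_cnj_cnj)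
    show ?thesis by (subst sum.swap) (simp add: h mult_ac)
  qed
  also have "\<dots> = cdot x (A *v y)"
    by (simp add: cdot_def matrix_vector_mult_def sum_distrib_left)
  finally show ?thesis .
qed

lemma outer_mult: "outer x y *v z = cdot y z *s x"
  by (simp add: outer_def cdot_def matrix_vector_mult_def vec_eq_iff sum_distrib_left mult_ac)

lemma herm_real:
  assumes "hermitian A" shows "cdot x (A *v x) = of_real (Re (cdot x (A *v x)))"
proof -
  have c: "cnj (cdot x (A *v x)) = cdot x (A *v x)" by (simp add: cdot_cnj herm_cdot[OF assms])
  have "Im (cdot x (A *v x)) = 0" using arg_cong[OF c, of Im] by simp
  then show ?thesis by (simp add: complex_eq_iff)
qed

lemma matrix_scaleR_mult: "(r *\<^sub>R M) *v z = r *\<^sub>R (M *v (z::complex^'n))"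
  by (simp add: matrix_vector_mult_def vec_eq_iff scaleR_conv_of_real[where 'a=complex] sum_distrib_left mult_ac)

lemma norm_smult: "norm (c *s (x::complex^'n)) = norm c * norm x"
  by (simp add: norm_vec_def L2_set_right_distrib norm_mult)

definition cnjv :: "complex^'n \<Rightarrow> complex^'n" where "cnjv x = (\<chi> j. cnj (x$j))"
definition bdot :: "complex^'n \<Rightarrow> complex^'n \<Rightarrow> complex" where "bdot r x = (\<Sum>j\<in>UNIV. r$j * x$j)"

lemma bdot_cnjv: "bdot (cnjv u) x = cdot u x"
  by (simp add: bdot_def cnjv_def cdot_def)

lemma bdot_span:
  assumes "s \<in> vec.span S" "\<And>r. r \<in> S \<Longrightarrow> bdot r v = 0"
  shows "bdot s v = 0"
proof -
  have "vec.subspace {r. bdot r v = 0}"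
    unfolding vec.subspace_def bdot_def by (auto simp: distrib_right sum.distrib mult.assoc simp flip: sum_distrib_left)
  then show ?thesis using vec.span_induct[OF assms(1), of "\<lambda>r. bdot r v = 0"] assms(2) by auto
qed

lemma mv_scaleR: "M *v (r *\<^sub>R z) = r *\<^sub>R (M *v (z::complex^'n))"
  by (simp add: scaleR_smult vec.scale)

lemma proj_unit:
  assumes "hermitian M" "M ** M = M" "M \<noteq> 0"
  shows "\<exists>x. norm x = 1 \<and> M *v x = x"
proof -
  obtain z where z: "M *v z \<noteq> 0"
    using assms(3) matrix_eq[of M 0] by auto
  define x where "x = (1 / norm (M *v z)) *\<^sub>R (M *v z)"
  have "M *v (M *v z) = M *v z" using assms(2) by (simp add: matrix_vector_mul_assoc)
  then have "M *v x = x" by (simp add: x_def mv_scaleR)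
  moreover have "norm x = 1" using z by (simp add: x_def)
  ultimately show ?thesis by blast
qed

lemma proj_second:
  assumes "hermitian M" "M ** M = M" "norm x = 1" "M *v x = x" "M \<noteq> outer x x"
  shows "\<exists>y. norm y = 1 \<and> M *v y = y \<and> cdot x y = 0"
proof -
  obtain z where z: "M *v z \<noteq> outer x x *v z"
    using assms(5) matrix_eq[of M "outer x x"] by auto
  define v where "v = M *v z - cdot x z *s x"
  have v0: "v \<noteq> 0" using z by (simp add: v_def outer_mult)
  have xx: "cdot x x = 1" using assms(3) by (simp add: cdot_self)
  have "cdot x v = 0"
    using herm_cdot[OF assms(1), of x z] assms(4) xx
    by (simp add: v_def cdot_diff_right cdot_smult_right)
  moreover have "M *v v = v"
    using assms(2,4) by (simp add: v_def matrix_vector_mult_diff_distrib vec.scale matrix_vector_mul_assoc)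
  ultimately have "M *v ((1 / norm v) *\<^sub>R v) = (1 / norm v) *\<^sub>R v \<and> cdot x ((1 / norm v) *\<^sub>R v) = 0
      \<and> norm ((1 / norm v) *\<^sub>R v) = 1"
    using v0 by (simp add: mv_scaleR cdot_scaleR_right)
  then show ?thesis by blast
qed

lemma cnjv_in_span_rows:
  assumes "hermitian M" "M *v x = x"
  shows "cnjv x \<in> vec.span (rows M)"
proof -
  have "cnjv x = (\<Sum>k\<in>UNIV. cnj (x$k) *s row k M)"
  unfolding vec_eq_iff proof
    fix j
    have "cnjv x $ j = cnj ((M *v x) $ j)" using assms(2) by (simp add: cnjv_def)
    also have "\<dots> = (\<Sum>k\<in>UNIV. cnj (x$k) * M$k$j)"
    proof -
      have h: "\<And>i j. cnj (M$i$j) = M$j$i" using assms(1) unfolding hermitian_def by (metis complex_cnj_cnj)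
      show ?thesis by (simp add: matrix_vector_mult_def h mult.commute)
    qed
    also have "\<dots> = (\<Sum>k\<in>UNIV. cnj (x$k) *s row k M) $ j"
      by (simp add: sum_component row_def)
    finally show "cnjv x $ j = (\<Sum>k\<in>UNIV. cnj (x$k) *s row k M) $ j" .
  qed
  also have "\<dots> \<in> vec.span (rows M)"
    by (intro vec.span_sum vec.span_scale vec.span_base) (auto simp: rows_def)
  finally show ?thesis .
qed

lemma rows_bdot:
  assumes "M *v x = 0" "r \<in> rows M"
  shows "bdot r x = 0"
  using assms by (auto simp: rows_def row_def bdot_def vec_eq_iff matrix_vector_mult_def)

lemma cnjv_cnjv[simp]: "cnjv (cnjv x) = x" by (simp add: cnjv_def vec_eq_iff)

lemma indep_two:
  assumes "norm x1 = 1" "norm x2 = 1" "cdot x1 x2 = 0"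
  shows "vec.independent {cnjv x1, cnjv x2}"
proof -
  have c11: "cdot x1 x1 = 1" "cdot x2 x2 = 1" using assms by (simp_all add: cdot_self)
  have c21: "cdot x2 x1 = 0" using assms(3) cdot_cnj[of x1 x2] by simp
  have ne: "cnjv x2 \<noteq> 0"
  proof
    assume "cnjv x2 = 0"
    then have "x2 = cnjv 0" by (metis cnjv_cnjv)
    then have "x2 = 0" by (simp add: cnjv_def vec_eq_iff)
    then show False using assms(2) by simp
  qed
  have "vec.independent {cnjv x2}" using ne by simp
  moreover have "cnjv x1 \<notin> vec.span {cnjv x2}"
  proof
    assume "cnjv x1 \<in> vec.span {cnjv x2}"
    then have "bdot (cnjv x1) x1 = 0" by (rule bdot_span) (simp add: bdot_cnjv c21)
    then show False using c11 by (simp add: bdot_cnjv)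
  qed
  ultimately show ?thesis using vec.independent_insertI by blast
qed
lemma rows_zero: "rows (0::complex^'n^'n) = {0}"
  by (auto simp: rows_def row_def vec_eq_iff)

lemma cnjv_inj: "cnjv x = cnjv y \<Longrightarrow> x = y"
  by (metis cnjv_cnjv)

lemma herm_iff: "hermitian A \<longleftrightarrow> (\<forall>i j. cnj (A$i$j) = A$j$i)"
  unfolding hermitian_def by (metis complex_cnj_cnj)

lemma rank1_outer:
  assumes "orth_proj P" "rank P = 1"
  shows "\<exists>x. norm x = 1 \<and> P = outer x x"
proof -
  have h: "hermitian P" "P ** P = P" using assms(1) by (auto simp: orth_proj_def)
  have d: "vec.dim (rows P) = 1" using assms(2) by (simp add: row_rank_def_gen)
  have "P \<noteq> 0" using d by (auto simp: rows_zero)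
  then obtain x1 where x1: "norm x1 = 1" "P *v x1 = x1" using proj_unit[OF h] by blast
  show ?thesis
  proof (rule ccontr)
    assume "\<not> ?thesis"
    then have "P \<noteq> outer x1 x1" using x1 by blast
    then obtain x2 where x2: "norm x2 = 1" "P *v x2 = x2" "cdot x1 x2 = 0"
      using proj_second[OF h x1] by blast
    have ind: "vec.independent {cnjv x1, cnjv x2}" by (rule indep_two[OF x1(1) x2(1) x2(3)])
    have "x1 \<noteq> x2" using x2(3) x1(1) by (auto simp: cdot_self)
    then have "cnjv x1 \<noteq> cnjv x2" using cnjv_inj by blast
    then have c: "card {cnjv x1, cnjv x2} = 2" by simp
    have "{cnjv x1, cnjv x2} \<subseteq> vec.span (rows P)"
      using cnjv_in_span_rows[OF h(1) x1(2)] cnjv_in_span_rows[OF h(1) x2(2)] by simp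
    from vec.independent_card_le_dim[OF this ind] have "2 \<le> vec.dim (vec.span (rows P))"
      using c by simp
    then show False using d by (simp add: vec.dim_span)
  qed
qed

lemma rank_n1_outer:
  fixes P :: "complex^'n^'n"
  assumes "orth_proj P" "rank P = CARD('n) - 1" "CARD('n) \<ge> 2"
  shows "\<exists>q. norm q = 1 \<and> (\<forall>z. P *v z = z - cdot q z *s q)"
proof -
  have h: "hermitian P" "P ** P = P" using assms(1) by (auto simp: orth_proj_def)
  have d: "vec.dim (rows P) = CARD('n) - 1" using assms(2) by (simp add: row_rank_def_gen)
  define Q where "Q = mat 1 - P"
  have Qz: "Q *v z = z - P *v z" for z by (simp add: Q_def matrix_vector_mult_diff_rdistrib)
  have hQ: "hermitian Q" using h(1) unfolding herm_iff by (simp add: Q_def mat_def)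
  have PP: "P *v (P *v z) = P *v z" for z using h(2) by (simp add: matrix_vector_mul_assoc)
  have QQ: "Q ** Q = Q"
    unfolding matrix_eq by (simp add: matrix_vector_mul_assoc[symmetric] Qz PP matrix_vector_mult_diff_distrib)
  show ?thesis
  proof (cases "Q = 0")
    case True
    then have "P *v z = z" for z using Qz[of z] by simp
    then have "v \<in> vec.span (rows P)" for v using cnjv_in_span_rows[OF h(1), of "cnjv v"] by simp
    then have "vec.span (rows P) = UNIV" by auto
    then have "vec.dim (rows P) = CARD('n)" by (metis vec.dim_span vec_dim_card)
    then show ?thesis using d assms(3) by simp
  next
    case False
    then obtain q1 where q1: "norm q1 = 1" "Q *v q1 = q1" using proj_unit[OF hQ QQ] by blast
    have Pq1: "P *v q1 = 0" using q1(2) Qz[of q1] by simp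
    show ?thesis
    proof (cases "Q = outer q1 q1")
      case True
      then have "P *v z = z - cdot q1 z *s q1" for z using Qz[of z] by (simp add: outer_mult)
      then show ?thesis using q1(1) by blast
    next
      case False
      then obtain q2 where q2: "norm q2 = 1" "Q *v q2 = q2" "cdot q1 q2 = 0"
        using proj_second[OF hQ QQ q1] by blast
      have Pq2: "P *v q2 = 0" using q2(2) Qz[of q2] by simp
      have c11: "cdot q1 q1 = 1" "cdot q2 q2 = 1" using q1(1) q2(1) by (simp_all add: cdot_self)
      have c21: "cdot q2 q1 = 0" using q2(3) cdot_cnj[of q1 q2] by simp
      obtain B where B: "B \<subseteq> rows P" "vec.independent B" "card B = vec.dim (rows P)"
        using vec.basis_exists[of "rows P"] by metis
      have fB: "finite B" using B(2) vec.finiteI_independent by blast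
      have B1: "bdot r q1 = 0" "bdot r q2 = 0" if "r \<in> B" for r
        using rows_bdot[OF Pq1] rows_bdot[OF Pq2] B(1) that by auto
      have n2: "cnjv q2 \<notin> vec.span B"
      proof
        assume "cnjv q2 \<in> vec.span B"
        then have "bdot (cnjv q2) q2 = 0" by (rule bdot_span) (simp add: B1)
        then show False using c11 by (simp add: bdot_cnjv)
      qed
      have n1: "cnjv q1 \<notin> vec.span (insert (cnjv q2) B)"
      proof
        assume "cnjv q1 \<in> vec.span (insert (cnjv q2) B)"
        then have "bdot (cnjv q1) q1 = 0" by (rule bdot_span) (auto simp: B1 bdot_cnjv c21)
        then show False using c11 by (simp add: bdot_cnjv)
      qed
      have ind: "vec.independent (insert (cnjv q1) (insert (cnjv q2) B))"
        using n1 n2 B(2) vec.independent_insertI by blast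
      have "cnjv q2 \<notin> B" using n2 vec.span_base by blast
      moreover have "cnjv q1 \<notin> insert (cnjv q2) B" using n1 vec.span_base by blast
      ultimately have "card (insert (cnjv q1) (insert (cnjv q2) B)) = card B + 2"
        using fB by simp
      moreover have "card (insert (cnjv q1) (insert (cnjv q2) B)) \<le> vec.dim (UNIV :: (complex^'n) set)"
        using vec.independent_card_le_dim[OF _ ind] by blast
      ultimately show ?thesis using B(3) d assms(3) by (simp add: vec_dim_card card_cart_basis)
    qed
  qed
qed
lemma outer_herm: "hermitian (outer x x)"
  by (simp add: herm_iff outer_def)

lemma outer_sq: "norm x = 1 \<Longrightarrow> outer x x ** outer x x = outer x x"
  unfolding matrix_eq
  by (simp add: matrix_vector_mul_assoc[symmetric] outer_mult vec.scale cdot_self)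

lemma outer_rank: assumes "norm x = 1" shows "rank (outer x x) = 1"
proof -
  have rows: "row i (outer x x) = x$i *s cnjv x" for i
    by (simp add: row_def outer_def cnjv_def vec_eq_iff)
  have "x \<noteq> 0" using assms by auto
  then obtain i where i: "x$i \<noteq> 0" by (auto simp: vec_eq_iff)
  have "(row i (outer x x))$i \<noteq> 0" using i by (simp add: rows cnjv_def)
  then have r0: "row i (outer x x) \<noteq> 0" by auto
  then have "cnjv x \<noteq> 0" by (auto simp: rows)
  have "rows (outer x x) \<subseteq> vec.span {cnjv x}"
    by (auto simp: rows_def rows vec.span_singleton)
  then have le: "vec.dim (rows (outer x x)) \<le> 1"
    using vec.dim_mono[of "rows (outer x x)" "{cnjv x}"] \<open>cnjv x \<noteq> 0\<close> by simp
  have "{row i (outer x x)} \<subseteq> rows (outer x x)" by (auto simp: rows_def)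
  then have "vec.dim {row i (outer x x)} \<le> vec.dim (rows (outer x x))" by (rule vec.dim_subset)
  then show ?thesis using le r0 by (simp add: row_rank_def_gen)
qed

lemma outer_PAP:
  assumes "hermitian A"
  shows "outer x x ** A ** outer x x = Re (cdot x (A *v x)) *\<^sub>R outer x x"
proof -
  have "(outer x x ** A ** outer x x) *v z = (Re (cdot x (A *v x)) *\<^sub>R outer x x) *v z" for z
  proof -
    have "(outer x x ** A ** outer x x) *v z = (cdot x z * cdot x (A *v x)) *s x"
      by (simp add: matrix_vector_mul_assoc[symmetric] outer_mult vec.scale)
    also have "\<dots> = (Re (cdot x (A *v x)) *\<^sub>R outer x x) *v z"
      by (subst herm_real[OF assms]) (simp add: matrix_scaleR_mult outer_mult scaleR_smult mult.commute)
    finally show ?thesis .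
  qed
  then show ?thesis by (simp add: matrix_eq)
qed

definition jnr :: "('m \<Rightarrow> complex^'n^'n) \<Rightarrow> complex^'n \<Rightarrow> real^'m" where
  "jnr A x = (\<chi> j. Re (cdot x (A j *v x)))"

lemma hrn1_eq:
  assumes herm: "\<And>j. hermitian (A j)"
  shows "higher_rank_nr 1 A = {jnr A x | x. norm x = 1}"
proof (intro set_eqI iffI)
  fix a assume "a \<in> higher_rank_nr 1 A"
  then obtain P where P: "orth_proj P" "rank P = 1" "\<And>j. P ** A j ** P = a$j *\<^sub>R P"
    by (auto simp: higher_rank_nr_def)
  obtain x where x: "norm x = 1" "P = outer x x" using rank1_outer[OF P(1,2)] by blast
  have "P \<noteq> 0" using P(2) by (auto simp: row_rank_def_gen rows_zero)
  have "a$j = Re (cdot x (A j *v x))" for j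
  proof -
    have "a$j *\<^sub>R P = Re (cdot x (A j *v x)) *\<^sub>R P"
      using P(3)[of j] outer_PAP[OF herm, of x j] x(2) by auto
    then show ?thesis using \<open>P \<noteq> 0\<close> by simp
  qed
  then have "a = jnr A x" by (simp add: jnr_def vec_eq_iff)
  then show "a \<in> {jnr A x | x. norm x = 1}" using x by blast
next
  fix a assume "a \<in> {jnr A x | x. norm x = 1}"
  then obtain x where x: "norm x = 1" "a = jnr A x" by blast
  show "a \<in> higher_rank_nr 1 A"
  proof -
    have "orth_proj (outer x x)" using outer_herm[of x] outer_sq[OF x(1)] by (simp add: orth_proj_def)
    moreover have "\<forall>j. outer x x ** A j ** outer x x = a $ j *\<^sub>R outer x x"
      using outer_PAP[OF herm, of x] x(2) by (simp add: jnr_def)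
    ultimately show ?thesis unfolding higher_rank_nr_def using outer_rank[OF x(1)] by blast
  qed
qed
lemma zero_in_q:
  fixes A :: "'m::finite \<Rightarrow> complex^'n^'n"
  assumes "0 \<in> higher_rank_nr (CARD('n) - 1) A" "CARD('n) \<ge> 2"
  shows "\<exists>q. norm q = 1 \<and> (\<forall>j y. cdot q y = 0 \<longrightarrow> A j *v y = cdot q (A j *v y) *s q)"
proof -
  obtain P where P: "orth_proj P" "rank P = CARD('n) - 1" "\<And>j. P ** A j ** P = 0"
    using assms(1) by (auto simp: higher_rank_nr_def)
  obtain q where q: "norm q = 1" "\<And>z. P *v z = z - cdot q z *s q"
    using rank_n1_outer[OF P(1,2) assms(2)] by blast
  have "A j *v y = cdot q (A j *v y) *s q" if "cdot q y = 0" for j y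
  proof -
    have Py: "P *v y = y" using q(2)[of y] that by simp
    have "(P ** A j ** P) *v y = 0" using P(3) by simp
    then have "P *v (A j *v y) = 0" using Py by (simp add: matrix_vector_mul_assoc[symmetric])
    then show ?thesis using q(2) by simp
  qed
  then show ?thesis using q(1) by blast
qed

lemma mcnj: "c * cnj c = (complex_of_real (cmod c))^2" "cnj c * c = (complex_of_real (cmod c))^2"
  by (metis complex_norm_square of_real_power, metis complex_norm_square of_real_power mult.commute)

lemma pyth:
  assumes "norm q = 1" "cdot q y = 0"
  shows "norm (c *s q + y) ^ 2 = cmod c ^ 2 + norm y ^ 2"
proof -
  have yq: "cdot y q = 0" using assms(2) cdot_cnj[of q y] by simp
  have "of_real (norm (c *s q + y) ^ 2) = cdot (c *s q + y) (c *s q + y)" by (simp add: cdot_self)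
  also have "\<dots> = cnj c * c * cdot q q + cdot y y"
    by (simp add: cdot_add_left cdot_add_right cdot_smult_left cdot_smult_right assms(2) yq)
  also have "\<dots> = of_real (cmod c ^ 2 + norm y ^ 2)"
    using assms(1) by (simp add: cdot_self mcnj)
  finally show ?thesis using of_real_eq_iff by blast
qed

definition Gm :: "complex^'n \<Rightarrow> ('m \<Rightarrow> complex^'n^'n) \<Rightarrow> real \<times> (complex^'n) \<Rightarrow> real^'m" where
  "Gm q A p = (\<chi> j. fst p * Re (cdot q (A j *v q)) + 2 * Re (cdot q (A j *v snd p)))"

lemma formula:
  assumes herm: "\<And>j. hermitian (A j)" and q: "norm q = 1"
    and Z: "\<And>j y. cdot q y = 0 \<Longrightarrow> A j *v y = cdot q (A j *v y) *s q"
  shows "jnr A x = Gm q A (cmod (cdot q x) ^ 2, cnj (cdot q x) *s (x - cdot q x *s q))"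
proof -
  define a where "a = cdot q x"
  define y where "y = x - a *s q"
  have qq: "cdot q q = 1" using q by (simp add: cdot_self)
  have qy: "cdot q y = 0" by (simp add: y_def a_def cdot_diff_right cdot_smult_right qq)
  have yq: "cdot y q = 0" using qy cdot_cnj[of q y] by simp
  have x: "x = a *s q + y" by (simp add: y_def)
  show ?thesis
  proof -
    have "Re (cdot x (A j *v x)) = cmod a ^ 2 * Re (cdot q (A j *v q)) + 2 * Re (cdot q (A j *v (cnj a *s y)))" for j
    proof -
      define b where "b = cdot q (A j *v y)"
      have Ay: "A j *v y = b *s q" using Z[OF qy] by (simp add: b_def)
      have yAq: "cdot y (A j *v q) = cnj b"
        using herm_cdot[OF herm, of j y q] cdot_cnj[of q "A j *v y"] by (simp add: b_def)
      have "cdot x (A j *v x) = cnj a * a * cdot q (A j *v q) + cnj a * b + a * cnj b"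
        unfolding x by (simp add: cdot_add_left cdot_add_right cdot_smult_left cdot_smult_right
            matrix_vector_right_distrib vec.scale Ay qq yq yAq algebra_simps)
      moreover have "cdot q (A j *v q) = of_real (Re (cdot q (A j *v q)))" by (rule herm_real[OF herm])
      moreover have "cnj a * a = of_real (cmod a ^ 2)" by (simp add: mcnj)
      moreover have "a * cnj b = cnj (cnj a * b)" by simp
      ultimately have e: "cdot x (A j *v x) = of_real (cmod a ^ 2) * of_real (Re (cdot q (A j *v q)))
          + (cnj a * b + cnj (cnj a * b))" by (metis add.assoc)
      have "cdot q (A j *v (cnj a *s y)) = cnj a * b" by (simp add: vec.scale cdot_smult_right b_def)
      then show ?thesis unfolding e by simp
    qed
    then show ?thesis by (simp add: jnr_def Gm_def vec_eq_iff a_def y_def)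
  qed
qed
definition Dq :: "complex^'n \<Rightarrow> (real \<times> (complex^'n)) set" where
  "Dq q = {p. cdot q (snd p) = 0}"
definition Eq :: "complex^'n \<Rightarrow> (real \<times> (complex^'n)) set" where
  "Eq q = {p \<in> Dq q. norm (snd p) ^ 2 = fst p * (1 - fst p)}"

lemma exists_perp:
  fixes q :: "complex^'n"
  assumes "CARD('n) \<ge> 2" "norm q = 1"
  shows "\<exists>x. norm x = 1 \<and> cdot q x = 0"
proof -
  have "q \<noteq> 0" using assms(2) by auto
  then obtain i where i: "q$i \<noteq> 0" by (auto simp: vec_eq_iff)
  have "\<exists>k. k \<noteq> i"
  proof (rule ccontr)
    assume "\<not> ?thesis"
    then have u: "(UNIV::'n set) = {i}" by auto
    have "CARD('n) = card {i}" by (subst u) (rule refl)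
    then have "CARD('n) = 1" by simp
    then show False using assms(1) by simp
  qed
  then obtain k where k: "k \<noteq> i" by blast
  have qq: "cdot q q = 1" using assms(2) by (simp add: cdot_self)
  define v where "v = axis k 1 - cdot q (axis k 1) *s q"
  have qv: "cdot q v = 0" by (simp add: v_def cdot_diff_right cdot_smult_right qq)
  have "v \<noteq> 0"
  proof
    assume v0: "v = 0"
    then have "(axis k 1 :: complex^'n) $ i = (cdot q (axis k 1) *s q) $ i" by (simp add: v_def)
    then have "cdot q (axis k 1) = 0" using i k by (simp add: axis_def)
    then have "(axis k 1 :: complex^'n) = 0" using v0 by (simp add: v_def)
    then show False by (simp add: axis_eq_0_iff)
  qed
  define x where "x = (1 / norm v) *\<^sub>R v"
  have "norm x = 1" "cdot q x = 0" using \<open>v \<noteq> 0\<close> by (simp_all add: x_def cdot_scaleR_right qv)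
  then show ?thesis by blast
qed

lemma image_jnr:
  fixes A :: "'m::finite \<Rightarrow> complex^'n^'n"
  assumes herm: "\<And>j. hermitian (A j)" and q: "norm q = 1"
    and Z: "\<And>j y. cdot q y = 0 \<Longrightarrow> A j *v y = cdot q (A j *v y) *s q"
    and n2: "CARD('n) \<ge> 2"
  shows "{jnr A x | x. norm x = 1} = Gm q A ` Eq q"
proof (intro set_eqI iffI)
  have qq: "cdot q q = 1" using q by (simp add: cdot_self)
  fix b assume "b \<in> {jnr A x | x. norm x = 1}"
  then obtain x where x: "norm x = 1" "b = jnr A x" by blast
  define a where "a = cdot q x"
  define y where "y = x - a *s q"
  have qy: "cdot q y = 0" by (simp add: y_def a_def cdot_diff_right cdot_smult_right qq)
  have "norm x ^ 2 = cmod a ^ 2 + norm y ^ 2" using pyth[OF q qy, of a] by (simp add: y_def)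
  then have ny: "norm y ^ 2 = 1 - cmod a ^ 2" using x(1) by simp
  have "(cmod a ^ 2, cnj a *s y) \<in> Eq q"
    using ny by (simp add: Eq_def Dq_def cdot_smult_right qy norm_smult power_mult_distrib)
  moreover have "b = Gm q A (cmod a ^ 2, cnj a *s y)"
    using formula[OF herm q Z] x(2) by (simp add: a_def y_def)
  ultimately show "b \<in> Gm q A ` Eq q" by blast
next
  have qq: "cdot q q = 1" using q by (simp add: cdot_self)
  fix b assume "b \<in> Gm q A ` Eq q"
  then obtain t w where tw: "(t, w) \<in> Eq q" "b = Gm q A (t, w)" by auto
  have qw: "cdot q w = 0" and nw: "norm w ^ 2 = t * (1 - t)" using tw(1) by (auto simp: Eq_def Dq_def)
  show "b \<in> {jnr A x | x. norm x = 1}"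
  proof (cases "t = 0")
    case True
    then have "w = 0" using nw by simp
    obtain x where x: "norm x = 1" "cdot q x = 0" using exists_perp[OF n2 q] by blast
    have "jnr A x = Gm q A (0, 0)" using formula[OF herm q Z, where x=x] x(2) by simp
    then have "b = jnr A x" using tw(2) True \<open>w = 0\<close> by simp
    then show ?thesis using x(1) by blast
  next
    case False
    have "0 \<le> t * (1 - t)" using nw[symmetric] by simp
    have t0: "t > 0"
    proof (rule ccontr)
      assume "\<not> t > 0"
      then have "t < 0" using False by simp
      then have "t * (1 - t) < 0" by (simp add: mult_neg_pos)
      then show False using \<open>0 \<le> t * (1 - t)\<close> by simp
    qed
    define s where "s = sqrt t"
    have s0: "s > 0" and ss: "s * s = t" using t0 by (simp_all add: s_def)
    define x where "x = complex_of_real s *s q + complex_of_real (1 / s) *s w"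
    have qx: "cdot q x = of_real s"
      by (simp add: x_def cdot_add_right cdot_smult_right qq qw)
    have "norm x ^ 2 = s ^ 2 + norm (complex_of_real (1 / s) *s w) ^ 2"
      using pyth[OF q, of "complex_of_real (1 / s) *s w" "of_real s"] qw s0
      by (simp add: x_def cdot_smult_right)
    also have "\<dots> = 1"
    proof -
      have "norm (complex_of_real (1 / s) *s w) ^ 2 = (1 / s) ^ 2 * norm w ^ 2"
        using s0 by (simp add: norm_smult power_mult_distrib norm_divide power_divide)
      also have "\<dots> = (1 / t) * (t * (1 - t))" using nw ss by (simp add: power2_eq_square)
      also have "\<dots> = 1 - t" using t0 by simp
      finally show ?thesis using ss by (simp add: power2_eq_square)
    qed
    finally have nx: "norm x = 1" using power2_eq_1_iff[of "norm x"] norm_ge_zero[of x] by linarith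
    have "x - cdot q x *s q = complex_of_real (1 / s) *s w" unfolding qx by (simp add: x_def)
    then have "cnj (cdot q x) *s (x - cdot q x *s q) = w"
      using s0 by (simp add: qx vector_smult_assoc flip: of_real_mult)
    moreover have "cmod (cdot q x) ^ 2 = t" using qx s0 ss by (simp add: power2_eq_square)
    ultimately have "jnr A x = b" using formula[OF herm q Z, where x=x] tw(2) by simp
    then show ?thesis using nx by blast
  qed
qed
lemma Gm_linear: "linear (Gm q A)"
proof (rule linearI)
  fix b1 b2 show "Gm q A (b1 + b2) = Gm q A b1 + Gm q A b2"
    by (simp add: Gm_def vec_eq_iff matrix_vector_right_distrib cdot_add_right algebra_simps)
next
  fix r b show "Gm q A (r *\<^sub>R b) = r *\<^sub>R Gm q A b"
    by (simp add: Gm_def vec_eq_iff mv_scaleR cdot_scaleR_right algebra_simps)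
qed

lemma Dq_subspace: "subspace (Dq q)"
  by (auto simp: subspace_def Dq_def cdot_add_right cdot_scaleR_right)

lemma Dq_dim:
  fixes q :: "complex^'n"
  assumes q: "norm q = 1"
  shows "dim (Dq q) = 2 * CARD('n) - 1"
proof -
  define a :: "real \<times> (complex^'n)" where "a = (0, q)"
  define b :: "real \<times> (complex^'n)" where "b = (0, \<i> *s q)"
  have ia: "inner a p = Re (cdot q (snd p))" for p by (cases p) (simp add: a_def inner_Pair inner_cdot)
  have ib: "inner b p = Im (cdot q (snd p))" for p
    by (cases p) (simp add: b_def inner_Pair inner_cdot cdot_smult_left)
  have D: "Dq q = {y \<in> UNIV. \<forall>x\<in>span {a, b}. orthogonal x y}"
  proof (intro set_eqI iffI)
    fix y assume "y \<in> Dq q"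
    then have "inner a y = 0" "inner b y = 0" by (auto simp: Dq_def ia ib)
    then show "y \<in> {y \<in> UNIV. \<forall>x\<in>span {a, b}. orthogonal x y}"
    proof (intro CollectI conjI UNIV_I ballI)
      fix x assume "x \<in> span {a, b}"
      have "orthogonal y x"
        by (rule orthogonal_to_span[OF \<open>x \<in> span {a, b}\<close>])
           (use \<open>inner a y = 0\<close> \<open>inner b y = 0\<close> in \<open>auto simp: orthogonal_def inner_commute\<close>)
      then show "orthogonal x y" by (simp add: orthogonal_commute)
    qed
  next
    fix y assume "y \<in> {y \<in> UNIV. \<forall>x\<in>span {a, b}. orthogonal x y}"
    then have "inner a y = 0" "inner b y = 0" by (auto simp: orthogonal_def span_base)
    then show "y \<in> Dq q" by (auto simp: Dq_def ia ib complex_eq_iff)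
  qed
  have qq: "cdot q q = 1" using q by (simp add: cdot_self)
  have a0: "a \<noteq> 0" using q by (auto simp: a_def zero_prod_def)
  have "inner b b = Im (cdot q (\<i> *s q))" using ib[of b] by (simp add: b_def)
  then have "inner b b = 1" by (simp add: cdot_smult_right qq)
  then have b0: "b \<noteq> 0" by auto
  have "inner a b = Re (cdot q (\<i> *s q))" using ia[of b] by (simp add: b_def)
  then have ab: "inner a b = 0" by (simp add: cdot_smult_right qq)
  then have "a \<noteq> b" using a0 by auto
  have ind: "independent {a, b}"
    by (rule pairwise_orthogonal_independent) (use a0 b0 ab in \<open>auto simp: pairwise_def orthogonal_def inner_commute\<close>)
  have "dim (span {a, b}) = 2" using ind \<open>a \<noteq> b\<close> by (simp add: dim_eq_card_independent)
  moreover have "dim {y \<in> UNIV. \<forall>x\<in>span {a, b}. orthogonal x y} + dim (span {a, b}) = dim (UNIV :: (real \<times> (complex^'n)) set)"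
    by (rule dim_subspace_orthogonal_to_vectors) auto
  ultimately show ?thesis unfolding D[symmetric] by simp
qed
lemma Eq_alt: "p \<in> Eq q \<longleftrightarrow> p \<in> Dq q \<and> norm (p - (1/2, 0)) = 1/2"
proof -
  obtain t w where p: "p = (t, w)" by (cases p)
  have "norm (p - (1/2, 0)) = 1/2 \<longleftrightarrow> norm (p - (1/2, 0)) ^ 2 = (1/2)^2"
    by (simp add: power2_eq_iff_nonneg)
  also have "\<dots> \<longleftrightarrow> (t - 1/2)^2 + norm w ^ 2 = 1/4"
    by (simp add: p norm_Pair power2_eq_square)
  also have "\<dots> \<longleftrightarrow> norm w ^ 2 = t * (1 - t)" by (auto simp: power2_eq_square algebra_simps)
  finally show ?thesis by (auto simp: Eq_def p)
qed

lemma Eq_zero: "0 \<in> Eq q"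
  by (simp add: Eq_def Dq_def zero_prod_def)

lemma kernel_exists:
  fixes q :: "complex^'n" and A :: "'m::finite \<Rightarrow> complex^'n^'n"
  assumes q: "norm q = 1" and m: "CARD('m) < 2 * CARD('n) - 1"
  shows "\<exists>k\<in>Dq q. k \<noteq> 0 \<and> Gm q A k = 0"
proof (rule ccontr)
  assume nk: "\<not> ?thesis"
  have "inj_on (Gm q A) (span (Dq q))"
  proof (rule inj_onI)
    fix x y assume xy: "x \<in> span (Dq q)" "y \<in> span (Dq q)" "Gm q A x = Gm q A y"
    have sp: "span (Dq q) = Dq q" using Dq_subspace[of q] by (simp add: span_eq_iff)
    have "x - y \<in> Dq q" using xy(1,2) Dq_subspace[of q] sp by (simp add: subspace_diff)
    moreover have "Gm q A (x - y) = 0" using xy(3) linear_diff[OF Gm_linear, of q A x y] by simp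
    ultimately show "x = y" using nk by auto
  qed
  then have "dim (Gm q A ` Dq q) = dim (Dq q)" using dim_image_eq[OF Gm_linear] by blast
  moreover have "dim (Gm q A ` Dq q) \<le> CARD('m)" using dim_subset_UNIV[of "Gm q A ` Dq q"] by simp
  ultimately show False using Dq_dim[OF q] m by simp
qed

lemma star_part:
  fixes q :: "complex^'n" and A :: "'m::finite \<Rightarrow> complex^'n^'n"
  assumes q: "norm q = 1" and m: "CARD('m) < 2 * CARD('n) - 1"
  shows "star_center (Gm q A ` Eq q) 0"
proof -
  obtain k where k: "k \<in> Dq q" "k \<noteq> 0" "Gm q A k = 0" using kernel_exists[OF q m] by blast
  have G0: "Gm q A 0 = 0" by (rule linear_0[OF Gm_linear])
  define c :: "real \<times> (complex^'n)" where "c = (1/2, 0)"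
  have nc: "norm c = 1/2" by (simp add: c_def norm_Pair)
  have "0 \<in> Gm q A ` Eq q" using Eq_zero G0 by force
  moreover have "closed_segment 0 b \<subseteq> Gm q A ` Eq q" if b: "b \<in> Gm q A ` Eq q" for b
  proof
    fix x assume "x \<in> closed_segment 0 b"
    then obtain u where u: "0 \<le> u" "u \<le> 1" "x = u *\<^sub>R b" by (auto simp: closed_segment_def)
    obtain e where e: "e \<in> Eq q" "b = Gm q A e" using b by blast
    have eD: "e \<in> Dq q" and ne: "norm (e - c) = 1/2" using e(1) by (auto simp: Eq_alt c_def)
    define p where "p = u *\<^sub>R e"
    have pD: "p \<in> Dq q" using eD Dq_subspace[of q] by (simp add: p_def subspace_scale)
    have "p - c = u *\<^sub>R (e - c) - (1 - u) *\<^sub>R c" by (simp add: p_def algebra_simps)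
    then have "norm (p - c) \<le> norm (u *\<^sub>R (e - c)) + norm ((1 - u) *\<^sub>R c)"
      using norm_triangle_ineq4 by metis
    then have "norm (p - c) \<le> u * norm (e - c) + (1 - u) * norm c"
      using u by simp
    moreover have "u * norm (e - c) + (1 - u) * norm c = 1/2" using ne nc by (simp add: field_simps)
    ultimately have np: "norm (p - c) \<le> 1/2" by linarith
    define h where "h = (\<lambda>l. norm (p + l *\<^sub>R k - c))"
    define L where "L = 1 / norm k"
    have hL: "1/2 \<le> h L"
    proof -
      have "L *\<^sub>R k = (p + L *\<^sub>R k - c) - (p - c)" by simp
      then have "norm (L *\<^sub>R k) \<le> norm (p + L *\<^sub>R k - c) + norm (p - c)"
        using norm_triangle_ineq4 by metis
      moreover have "norm (L *\<^sub>R k) = 1" using k(2) by (simp add: L_def)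
      ultimately show ?thesis using np by (simp add: h_def)
    qed
    have "continuous_on {0..L} h" unfolding h_def by (intro continuous_intros)
    then obtain l where l: "0 \<le> l" "l \<le> L" "h l = 1/2"
      using IVT'[of h 0 "1/2" L] np hL k(2) by (auto simp: h_def L_def)
    have "p + l *\<^sub>R k \<in> Eq q"
      using l(3) pD k(1) Dq_subspace[of q] by (simp add: Eq_alt h_def c_def subspace_add subspace_scale)
    moreover have "Gm q A (p + l *\<^sub>R k) = x"
      using u(3) e(2) k(3) by (simp add: p_def linear_add[OF Gm_linear] linear_scale[OF Gm_linear])
    ultimately show "x \<in> Gm q A ` Eq q" by force
  qed
  ultimately show ?thesis by (simp add: star_center_def)
qed
definition Hm :: "complex^'n \<Rightarrow> real \<times> (complex^'n) \<Rightarrow> complex^'n^'n" where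
  "Hm q p = fst p *\<^sub>R outer q q + outer q (snd p) + outer (snd p) q"

lemma Hm_mult: "Hm q p *v z = fst p *\<^sub>R (cdot q z *s q) + cdot (snd p) z *s q + cdot q z *s snd p"
  by (simp add: Hm_def matrix_vector_mult_add_rdistrib matrix_scaleR_mult outer_mult)

lemma Hm_linear: "linear (Hm q)"
proof (rule linearI)
  fix b1 b2 show "Hm q (b1 + b2) = Hm q b1 + Hm q b2"
    unfolding matrix_eq
    by (simp add: matrix_vector_mult_add_rdistrib Hm_mult cdot_add_left vec_eq_iff
        scaleR_conv_of_real[where 'a=complex] algebra_simps)
next
  fix r b show "Hm q (r *\<^sub>R b) = r *\<^sub>R Hm q b"
    unfolding matrix_eq
    by (simp add: matrix_scaleR_mult Hm_mult cdot_scaleR_left vec_eq_iff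
        scaleR_conv_of_real[where 'a=complex] algebra_simps)
qed

lemma A_in_Hm:
  assumes herm: "hermitian B" and q: "norm q = 1"
    and Z: "\<And>y. cdot q y = 0 \<Longrightarrow> B *v y = cdot q (B *v y) *s q"
  shows "B = Hm q (Re (cdot q (B *v q)), B *v q - cdot q (B *v q) *s q)"
  unfolding matrix_eq
proof
  fix z
  have qq: "cdot q q = 1" using q by (simp add: cdot_self)
  define a where "a = cdot q z"
  define y where "y = z - a *s q"
  define c where "c = cdot q (B *v q)"
  have cr: "c = of_real (Re c)" unfolding c_def by (rule herm_real[OF herm])
  have cc: "cnj c = c" using cr by (metis complex_cnj_complex_of_real)
  have qy: "cdot q y = 0" by (simp add: y_def a_def cdot_diff_right cdot_smult_right qq)
  have z: "z = a *s q + y" by (simp add: y_def)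
  have Bqq: "cdot (B *v q) q = c" using herm_cdot[OF herm, of q q] by (simp add: c_def)
  have "cdot q (B *v y) = cdot (B *v q) y" using herm_cdot[OF herm, of q y] by simp
  also have "\<dots> = cdot (B *v q) z - a * c"
    by (simp add: y_def cdot_diff_right cdot_smult_right Bqq)
  finally have qBy: "cdot q (B *v y) = cdot (B *v q) z - a * c" .
  have "B *v z = a *s (B *v q) + (cdot (B *v q) z - a * c) *s q"
    using Z[OF qy] qBy by (simp add: z matrix_vector_right_distrib vec.scale)
  moreover have "Hm q (Re c, B *v q - c *s q) *v z
      = Re c *\<^sub>R (a *s q) + (cdot (B *v q) z - cnj c * a) *s q + a *s (B *v q - c *s q)"
    by (simp add: Hm_mult a_def cdot_diff_left cdot_smult_left)
  moreover have "Re c *\<^sub>R (a *s q) + (cdot (B *v q) z - cnj c * a) *s q + a *s (B *v q - c *s q)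
      = a *s (B *v q) + (cdot (B *v q) z - a * c) *s q"
    by (simp only: scaleR_smult cr[symmetric] cc) (simp add: vec_eq_iff algebra_simps)
  ultimately show "B *v z = Hm q (Re (cdot q (B *v q)), B *v q - cdot q (B *v q) *s q) *v z"
    unfolding c_def[symmetric] by simp
qed

lemma lin_indep_props:
  fixes A :: "'m::finite \<Rightarrow> 'b::real_vector"
  assumes "lin_indep_tuple A"
  shows "inj A" "independent (range A)"
proof -
  show ij: "inj A"
  proof (rule injI)
    fix i k assume eq: "A i = A k"
    show "i = k"
    proof (rule ccontr)
      assume ne: "i \<noteq> k"
      define c where "c = (\<lambda>j. (if j = i then 1 else 0) - (if j = k then 1 else 0 :: real))"
      have cj: "c j *\<^sub>R A j = (if j = i then A j else 0) - (if j = k then A j else 0)" for j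
        by (cases "j = i"; cases "j = k") (auto simp: c_def)
      have "(\<Sum>j\<in>UNIV. c j *\<^sub>R A j) = (\<Sum>j\<in>UNIV. (if j = i then A j else 0)) - (\<Sum>j\<in>UNIV. (if j = k then A j else 0))"
        unfolding cj by (rule sum_subtractf)
      also have "\<dots> = 0" using eq by simp
      finally have "c i = 0" using assms unfolding lin_indep_tuple_def by blast
      then show False using ne by (simp add: c_def)
    qed
  qed
  show "independent (range A)"
  proof
    assume "dependent (range A)"
    then obtain c v where s: "(\<Sum>v\<in>range A. c v *\<^sub>R v) = 0" and v: "v \<in> range A" "c v \<noteq> 0"
      using dependent_finite[of "range A"] by auto
    have "(\<Sum>j\<in>UNIV. c (A j) *\<^sub>R A j) = 0" using s ij by (simp add: sum.reindex)
    then have "\<forall>j. c (A j) = 0" using assms[unfolded lin_indep_tuple_def, rule_format, of "\<lambda>j. c (A j)"] by simp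
    then show False using v by auto
  qed
qed
lemma G_inj:
  fixes q :: "complex^'n" and A :: "'m::finite \<Rightarrow> complex^'n^'n"
  assumes herm: "\<And>j. hermitian (A j)" and q: "norm q = 1"
    and Z: "\<And>j y. cdot q y = 0 \<Longrightarrow> A j *v y = cdot q (A j *v y) *s q"
    and indep: "lin_indep_tuple A" and m: "CARD('m) = 2 * CARD('n) - 1"
    and d: "d \<in> Dq q" "Gm q A d = 0"
  shows "d = 0"
proof -
  have qq: "cdot q q = 1" using q by (simp add: cdot_self)
  have Ain: "A j \<in> Hm q ` Dq q" for j
  proof -
    have "A j = Hm q (Re (cdot q (A j *v q)), A j *v q - cdot q (A j *v q) *s q)"
      by (rule A_in_Hm[OF herm q Z])
    moreover have "(Re (cdot q (A j *v q)), A j *v q - cdot q (A j *v q) *s q) \<in> Dq q"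
      by (simp add: Dq_def cdot_diff_right cdot_smult_right qq)
    ultimately show ?thesis by blast
  qed
  have ij: "inj A" and ind: "independent (range A)" using lin_indep_props[OF indep] by auto
  have "dim (Hm q ` Dq q) \<le> dim (Dq q)" by (rule dim_image_le[OF Hm_linear])
  also have "\<dots> = card (range A)" using Dq_dim[OF q] m ij by (simp add: card_image)
  finally have sp: "Hm q ` Dq q \<subseteq> span (range A)"
    using card_ge_dim_independent[of "range A" "Hm q ` Dq q"] Ain ind by auto
  obtain t w where tw: "d = (t, w)" by (cases d)
  have qw: "cdot q w = 0" using d(1) by (simp add: Dq_def tw)
  have wq: "cdot w q = 0" using qw cdot_cnj[of q w] by simp
  define \<phi> where "\<phi> = (\<lambda>H. t * Re (cdot q (H *v q)) + 2 * Re (cdot q (H *v w)))"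
  have lin: "linear \<phi>"
  proof (rule linearI)
    fix b1 b2 show "\<phi> (b1 + b2) = \<phi> b1 + \<phi> b2"
      by (simp add: \<phi>_def matrix_vector_mult_add_rdistrib cdot_add_right algebra_simps)
  next
    fix r b show "\<phi> (r *\<^sub>R b) = r *\<^sub>R \<phi> b"
      by (simp add: \<phi>_def matrix_scaleR_mult cdot_scaleR_right algebra_simps)
  qed
  have "\<phi> (A j) = 0" for j using d(2) by (simp add: \<phi>_def Gm_def tw vec_eq_iff)
  then have "span (range A) \<subseteq> {H. \<phi> H = 0}"
  proof (intro span_minimal)
    show "subspace {H. \<phi> H = 0}"
      unfolding subspace_def using linear_0[OF lin] linear_add[OF lin] linear_scale[OF lin] by auto
  qed (use \<open>\<And>j. \<phi> (A j) = 0\<close> in auto)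
  then have "\<phi> (Hm q d) = 0" using sp d(1) by auto
  moreover have "\<phi> (Hm q d) = t * t + 2 * norm w ^ 2"
    using q by (simp add: \<phi>_def tw Hm_mult qq qw wq cdot_add_right cdot_scaleR_right cdot_smult_right cdot_self)
  ultimately have e: "t * t + 2 * norm w ^ 2 = 0" by simp
  have "0 \<le> t * t" "0 \<le> norm w ^ 2" by simp_all
  then have "t * t = 0" "norm w ^ 2 = 0" using e by linarith+
  then have "t = 0" "norm w = 0" by simp_all
  then show ?thesis by (simp add: tw zero_prod_def)
qed
lemma not_starlike_image:
  fixes L :: "real^'m \<Rightarrow> real^'m"
  assumes lin: "linear L" and ij: "inj L"
  shows "\<not> starlike {L (axis j0 1 + u) | u. norm u = 1}"
proof
  let ?W = "{L (axis j0 1 + u) | u. norm u = 1}"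
  assume "starlike ?W"
  then obtain a where a: "a \<in> ?W" "\<And>x. x \<in> ?W \<Longrightarrow> closed_segment a x \<subseteq> ?W"
    unfolding starlike_def by blast
  obtain u0 where u0: "norm u0 = 1" "a = L (axis j0 1 + u0)" using a(1) by blast
  have "L (axis j0 1 - u0) \<in> ?W"
    by (rule CollectI, rule exI[of _ "- u0"]) (simp add: u0(1))
  then have "midpoint a (L (axis j0 1 - u0)) \<in> ?W" using a(2) midpoint_in_closed_segment by blast
  moreover have "midpoint a (L (axis j0 1 - u0)) = L (axis j0 1)"
    unfolding midpoint_def u0(2) linear_add[OF lin, symmetric] linear_scale[OF lin, symmetric]
    by (simp add: scaleR_2[symmetric] algebra_simps)
  ultimately obtain u where u: "norm u = 1" "L (axis j0 1) = L (axis j0 1 + u)" by auto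
  have "axis j0 1 = axis j0 1 + u" using injD[OF ij u(2)] .
  then show False using u(1) by simp
qed

lemma sphere_part:
  fixes q :: "complex^'n" and A :: "'m::finite \<Rightarrow> complex^'n^'n"
  assumes q: "norm q = 1" and dimeq: "dim (Dq q) = CARD('m)"
    and inj0: "\<And>d. d \<in> Dq q \<Longrightarrow> Gm q A d = 0 \<Longrightarrow> d = 0"
  shows "\<exists>S::real^'m^'m. invertible S \<and> Gm q A ` Eq q = {(axis j0 1 + u) v* S | u. norm u = 1}
           \<and> \<not> starlike (Gm q A ` Eq q)"
proof -
  have dd: "dim (UNIV :: (real^'m) set) = dim (Dq q)" using dimeq by simp
  have "\<exists>(f :: real^'m \<Rightarrow> real \<times> (complex^'n)) (g :: real \<times> (complex^'n) \<Rightarrow> real^'m). linear f \<and> f ` UNIV = Dq q \<and> (\<forall>x. norm (f x) = norm x)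
      \<and> (\<forall>x\<in>Dq q. norm (g x) = norm x) \<and> (\<forall>x\<in>Dq q. f (g x) = x)"
    apply (rule isometries_subspaces[OF subspace_UNIV Dq_subspace dd])
    subgoal for f g by (intro exI[where x=f] exI[where x=g]) auto
    done
  then obtain f :: "real^'m \<Rightarrow> real \<times> (complex^'n)" and g :: "real \<times> (complex^'n) \<Rightarrow> real^'m" where fg: "linear f" "f ` UNIV = Dq q" "\<And>x. norm (f x) = norm x"
      "\<And>x. x \<in> Dq q \<Longrightarrow> norm (g x) = norm x" "\<And>x. x \<in> Dq q \<Longrightarrow> f (g x) = x"
    by blast
  define b0 :: "real \<times> (complex^'n)" where "b0 = (1, 0)"
  have b0D: "b0 \<in> Dq q" by (simp add: b0_def Dq_def)
  have neq: "norm (axis j0 (1::real)) = norm (g b0)" using fg(4)[OF b0D] by (simp add: b0_def norm_Pair)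
  obtain R where R: "orthogonal_transformation R" "R (axis j0 (1::real)) = g b0"
    by (rule orthogonal_transformation_exists[OF neq])
  define f' where "f' = f \<circ> R"
  have lf': "linear f'" unfolding f'_def
    using fg(1) orthogonal_transformation_linear[OF R(1)] by (simp add: linear_compose)
  have f'e: "f' (axis j0 1) = b0" using R(2) fg(5)[OF b0D] by (simp add: f'_def)
  have nf': "norm (f' x) = norm x" for x using fg(3) orthogonal_transformation_norm[OF R(1)] by (simp add: f'_def)
  have f'D: "f' x \<in> Dq q" for x using fg(2) by (auto simp: f'_def)
  have f'surj: "\<exists>u. f' u = v" if "v \<in> Dq q" for v
  proof -
    from surjD[OF orthogonal_transformation_surj[OF R(1)], of "g v"] obtain u where "R u = g v" by metis
    then have "f' u = v" using fg(5)[OF that] by (simp add: f'_def)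
    then show ?thesis by blast
  qed
  define L where "L = (\<lambda>x. (1/2) *\<^sub>R Gm q A (f' x))"
  have lL: "linear L"
    by (rule linearI) (simp_all add: L_def linear_add[OF lf'] linear_add[OF Gm_linear]
        linear_scale[OF lf'] linear_scale[OF Gm_linear] algebra_simps)
  have iL: "inj L"
  proof (rule injI)
    fix x y assume "L x = L y"
    then have "Gm q A (f' (x - y)) = 0"
      by (simp add: L_def linear_diff[OF lf'] linear_diff[OF Gm_linear])
    then have "f' (x - y) = 0" using inj0 f'D by blast
    then show "x = y" using nf'[of "x - y"] by simp
  qed
  define S where "S = transpose (matrix L)"
  have SL: "v v* S = L v" for v using lL by (simp add: S_def matrix_vector_mul(2)[OF lL, THEN fun_cong])
  have mL: "(*v) (matrix L) = L" using matrix_vector_mul(2)[OF lL] by simp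
  have "inj ((*v) (matrix L))" using iL unfolding mL .
  then have "invertible (matrix L)" by (simp add: invertible_left_inverse matrix_left_invertible_injective)
  then have invS: "invertible S" by (simp add: S_def transpose_invertible)
  define c :: "real \<times> (complex^'n)" where "c = (1/2, 0)"
  have cb: "c = (1/2) *\<^sub>R b0" by (simp add: c_def b0_def)
  have eqW: "Gm q A ` Eq q = {L (axis j0 1 + u) | u. norm u = 1}"
  proof (intro set_eqI iffI)
    fix x assume "x \<in> Gm q A ` Eq q"
    then obtain p where p: "p \<in> Eq q" "x = Gm q A p" by blast
    have pD: "p \<in> Dq q" and np: "norm (p - c) = 1/2" using p(1) by (auto simp: Eq_alt c_def)
    have "2 *\<^sub>R (p - c) \<in> Dq q"
      using pD b0D Dq_subspace[of q] by (simp add: cb subspace_diff subspace_scale)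
    then obtain u where u: "f' u = 2 *\<^sub>R (p - c)" using f'surj by blast
    have nu: "norm u = 1" using nf'[of u] np u by simp
    have "f' (axis j0 1 + u) = 2 *\<^sub>R p" using u f'e by (simp add: linear_add[OF lf'] cb algebra_simps)
    then have "L (axis j0 1 + u) = x"
      by (simp add: L_def p(2) linear_scale[OF Gm_linear])
    then show "x \<in> {L (axis j0 1 + u) | u. norm u = 1}" using nu by blast
  next
    fix x assume "x \<in> {L (axis j0 1 + u) | u. norm u = 1}"
    then obtain u where u: "norm u = 1" "x = L (axis j0 1 + u)" by blast
    define p where "p = (1/2) *\<^sub>R f' (axis j0 1 + u)"
    have pD: "p \<in> Dq q" using f'D Dq_subspace[of q] by (simp add: p_def subspace_scale)
    have "p - c = (1/2) *\<^sub>R f' u" using f'e by (simp add: p_def cb linear_add[OF lf'] algebra_simps)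
    then have "norm (p - c) = 1/2" using nf'[of u] u(1) by simp
    then have "p \<in> Eq q" using pD by (simp add: Eq_alt c_def)
    moreover have "x = Gm q A p" by (simp add: u(2) L_def p_def linear_scale[OF Gm_linear])
    ultimately show "x \<in> Gm q A ` Eq q" by blast
  qed
  have "Gm q A ` Eq q = {(axis j0 1 + u) v* S | u. norm u = 1}" unfolding eqW SL ..
  moreover have "\<not> starlike (Gm q A ` Eq q)" unfolding eqW by (rule not_starlike_image[OF lL iL])
  ultimately show ?thesis using invS by blast
qed

theorem proposition3p5:
  fixes A :: "'m::finite \<Rightarrow> complex^'n^'n"
  assumes n2: "CARD('n) \<ge> 2"
    and herm: "\<And>j. hermitian (A j)"
    and indep: "lin_indep_tuple A"
    and zero_in: "0 \<in> higher_rank_nr (CARD('n) - 1) A"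
  shows "(CARD('m) = 2 * CARD('n) - 1 \<longrightarrow>
            (\<forall>j0::'m. \<exists>S::real^'m^'m. invertible S \<and>
               higher_rank_nr 1 A = {(axis j0 1 + u) v* S | u. norm u = 1})
            \<and> \<not> starlike (higher_rank_nr 1 A))
       \<and> (CARD('m) < 2 * CARD('n) - 1 \<longrightarrow> star_center (higher_rank_nr 1 A) 0)"
proof -
  obtain q where q: "norm q = 1"
    and Z: "\<And>j y. cdot q y = 0 \<Longrightarrow> A j *v y = cdot q (A j *v y) *s q"
    using zero_in_q[OF zero_in n2] by blast
  have W: "higher_rank_nr 1 A = Gm q A ` Eq q"
    using hrn1_eq[where A=A, OF herm] image_jnr[where A=A, OF herm q Z n2] by simp
  have partA: "(\<forall>j0::'m. \<exists>S::real^'m^'m. invertible S \<and>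
               higher_rank_nr 1 A = {(axis j0 1 + u) v* S | u. norm u = 1})
            \<and> \<not> starlike (higher_rank_nr 1 A)"
    if m: "CARD('m) = 2 * CARD('n) - 1"
  proof -
    have dimeq: "dim (Dq q) = CARD('m)" using Dq_dim[OF q] m by simp
    have inj0: "\<And>d. d \<in> Dq q \<Longrightarrow> Gm q A d = 0 \<Longrightarrow> d = 0"
      using G_inj[where A=A, OF herm q Z indep m] by blast
    have "\<exists>S::real^'m^'m. invertible S \<and>
               higher_rank_nr 1 A = {(axis j0 1 + u) v* S | u. norm u = 1}" for j0
      using sphere_part[where A=A, OF q dimeq inj0, of j0] W by auto
    moreover have "\<not> starlike (higher_rank_nr 1 A)"
      using sphere_part[where A=A, OF q dimeq inj0] W by auto
    ultimately show ?thesis by blast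
  qed
  have partB: "star_center (higher_rank_nr 1 A) 0" if m: "CARD('m) < 2 * CARD('n) - 1"
    using star_part[where A=A, OF q m] W by simp
  show ?thesis using partA partB by blast
qed

end
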